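(* Fix $\alpha\ge 1$, $\kappa>0$, $\epsilon_0>0$, $L>0$, and a fixed finite collection of disjoint closed subsets $T_1,\dots,T_m\subset\mathcal M$. Let $\mathcal P(\epsilon_0,L,d)$ be the class of joint distributions of $(X,Y)$, with $X\in\mathcal M$ having a density $f_X$ and $Y\in\{0,1\}$, such that each $T_j$ is a cluster with respect to $\alpha$ and $\kappa$ and Assumptions (A1), (A2), (A3) below hold. Then for all $n_\ell\in\mathbb N^+$, $$\inf_{\hat h}\ \sup_{\mathbb P_{X,Y}\in\mathcal P(\epsilon_0,L,d)} E_{n_\ell}\{\mathcal R_{\mathcal T}(\hat h)\}-\mathcal R_{\mathcal T}(h^* )\ \ge\ C_1\exp(-C_2 n_\ell)$$ for some constants $C_1,C_2>0$, where the infimum is over all classifiers $\hat h$ constructed from an i.i.d. labeled sample $\{(X_i,Y_i)\}_{i=1}^{n_\ell}$ drawn from $\mathbb P_{X,Y}$.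
   Context: $\mathcal M\subset\mathbb R^D$ is a compact Riemannian manifold of intrinsic dimension $d$ (with the metric induced from $\mathbb R^D$). For $\alpha\ge1$ and $x_1,x_2\in\mathcal M$, the power-$\alpha$ Fermat distance is $$d_{\mathcal M,\alpha}(x_1,x_2)=\inf_\gamma\Big[\mu_{\alpha,d}\int_0^1\frac{\|\gamma'(t)\|_{\mathbb R^D}}{f_X\{\gamma(t)\}^{(\alpha-1)/d}}\,dt\Big]^{1/\alpha},$$ the infimum over continuously differentiable paths $\gamma:[0,1]\to\mathcal M$ with $\gamma(0)=x_1,\gamma(1)=x_2$, where $\mu_{\alpha,d}>0$ is a (percolation) constant depending only on $\alpha,d$, with $\mu_{1,d}=1$. A closed set $T\subset\mathcal M$ is a cluster with respect to $\alpha,\kappa$ if for all $x_1,x_2\in T$ the optimal path $\gamma_{12}$ of $d_{\mathcal M,\alpha}(x_1,x_2)$ satisfies $\gamma_{12}(t)\in T$ and $f_X\{\gamma_{12}(t)\}\ge\kappa$ for all $t\in[0,1]$. Let $\eta(x)=P(Y=1\mid X=x)$. (A1) $\inf_{x\in\cup_{j=1}^mT_j}|2\eta(x)-1|>\epsilon_0$. (A2) $|\eta(x_1)-\eta(x_2)|\le L\,d_{\mathcal M,\alpha}(x_1,x_2)$ for all $x_1,x_2\in\mathcal M$. (A3) For every $x\in\mathcal M$ there is $t_0>0$ such that for all $t\le t_0$, $P(d_{\mathcal M,\alpha}(X,x)\le t)\ge Cf_X(x)t^d$, for a positive constant $C$. For a classifier $h$, $\mathcal R_{\mathcal T}(h)=P(Y\ne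 h(X),\,X\in\cup_{j=1}^mT_j)$; $h^*(x)=\mathbb 1\{\eta(x)>1/2\}$ is the Bayes classifier; $E_{n_\ell}$ denotes expectation over the labeled sample. *)

theory Defs
  imports "HOL-Probability.Probability"
begin

definition dir_deriv :: "'a::euclidean_space \<Rightarrow> ('a \<Rightarrow> 'b::real_normed_vector) \<Rightarrow> 'a \<Rightarrow> 'b" where
  "dir_deriv v g x = frechet_derivative g (at x) v"

definition smooth_on :: "'a::euclidean_space set \<Rightarrow> ('a \<Rightarrow> 'b::real_normed_vector) \<Rightarrow> bool" where
  "smooth_on U g \<longleftrightarrow> open U \<and>
     (\<forall>vs::'a list. continuous_on U (fold dir_deriv vs g) \<and>
                   (\<forall>x\<in>U. fold dir_deriv vs g differentiable (at x)))"

text \<open>M is a smooth embedded submanifold of dimension d: locally M is the graph of a smooth map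
  from (an open part of) a d-dimensional linear subspace S into its orthogonal complement.\<close>
definition embedded_submanifold :: "nat \<Rightarrow> 'a::euclidean_space set \<Rightarrow> bool" where
  "embedded_submanifold d M \<longleftrightarrow>
     (\<forall>x\<in>M. \<exists>S U W g. subspace S \<and> dim S = d \<and> open U \<and> x \<in> U \<and> smooth_on W g \<and>
        (\<forall>s\<in>W. \<forall>v\<in>S. orthogonal v (g s)) \<and>
        M \<inter> U = {s + g s | s. s \<in> S \<inter> W})"

definition compact_manifold :: "nat \<Rightarrow> 'a::euclidean_space set \<Rightarrow> bool" where
  "compact_manifold d M \<longleftrightarrow> compact M \<and> embedded_submanifold d M"

section \<open>Riemannian volume = d-dimensional Hausdorff measure\<close>

definition hausdorff_pre :: "nat \<Rightarrow> real \<Rightarrow> 'a::euclidean_space set \<Rightarrow> ennreal" where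
  "hausdorff_pre d \<delta> A =
     (INF C \<in> {C :: nat \<Rightarrow> 'a set. A \<subseteq> (\<Union>i. C i) \<and> (\<forall>i. bounded (C i) \<and> diameter (C i) \<le> \<delta>)}.
        (\<Sum>i. ennreal (unit_ball_vol (real d) * (diameter (C i) / 2) ^ d)))"

definition hausdorff_outer :: "nat \<Rightarrow> 'a::euclidean_space set \<Rightarrow> ennreal" where
  "hausdorff_outer d A = (SUP \<delta> \<in> {0<..}. hausdorff_pre d \<delta> A)"

definition vol_on :: "nat \<Rightarrow> 'a::euclidean_space set \<Rightarrow> 'a measure" where
  "vol_on d M = measure_of UNIV (sets borel) (\<lambda>A. hausdorff_outer d (A \<inter> M))"

definition adm_path :: "'a::euclidean_space set \<Rightarrow> 'a \<Rightarrow> 'a \<Rightarrow> (real \<Rightarrow> 'a) \<Rightarrow> bool" where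
  "adm_path M x1 x2 \<gamma> \<longleftrightarrow> \<gamma> C1_differentiable_on {0..1} \<and> \<gamma> ` {0..1} \<subseteq> M \<and> \<gamma> 0 = x1 \<and> \<gamma> 1 = x2"

text \<open>Weight 1 / f^((alpha-1)/d), with the convention 1/0 = infinity when the exponent is positive.\<close>
definition fermat_weight :: "real \<Rightarrow> nat \<Rightarrow> ('a \<Rightarrow> real) \<Rightarrow> 'a \<Rightarrow> ennreal" where
  "fermat_weight \<alpha> d f y =
     (if \<alpha> = 1 then 1 else if f y > 0 then ennreal (1 / (f y powr ((\<alpha> - 1) / real d))) else \<infinity>)"

definition fermat_cost :: "real \<Rightarrow> nat \<Rightarrow> ('a::euclidean_space \<Rightarrow> real) \<Rightarrow> (real \<Rightarrow> 'a) \<Rightarrow> ennreal" where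
  "fermat_cost \<alpha> d f \<gamma> =
     (\<integral>\<^sup>+ t \<in> {0..1}. ennreal (norm (vector_derivative \<gamma> (at t))) * fermat_weight \<alpha> d f (\<gamma> t) \<partial>lborel)"

definition fermat_inf :: "real \<Rightarrow> nat \<Rightarrow> 'a::euclidean_space set \<Rightarrow> ('a \<Rightarrow> real) \<Rightarrow> 'a \<Rightarrow> 'a \<Rightarrow> ennreal" where
  "fermat_inf \<alpha> d M f x1 x2 = (INF \<gamma> \<in> {\<gamma>. adm_path M x1 x2 \<gamma>}. fermat_cost \<alpha> d f \<gamma>)"

definition fermat_dist :: "(real \<Rightarrow> nat \<Rightarrow> real) \<Rightarrow> real \<Rightarrow> nat \<Rightarrow> 'a::euclidean_space set \<Rightarrow> ('a \<Rightarrow> real)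
    \<Rightarrow> 'a \<Rightarrow> 'a \<Rightarrow> ennreal" where
  "fermat_dist \<mu> \<alpha> d M f x1 x2 =
     (let c = fermat_inf \<alpha> d M f x1 x2 in
      if c = \<infinity> then \<infinity> else ennreal ((\<mu> \<alpha> d * enn2real c) powr (1 / \<alpha>)))"

text \<open>Optimal paths: admissible paths attaining the infimum (x \<mapsto> (mu x)^(1/alpha) is monotone).\<close>
definition optimal_path :: "real \<Rightarrow> nat \<Rightarrow> 'a::euclidean_space set \<Rightarrow> ('a \<Rightarrow> real) \<Rightarrow> 'a \<Rightarrow> 'a \<Rightarrow> (real \<Rightarrow> 'a) \<Rightarrow> bool" where
  "optimal_path \<alpha> d M f x1 x2 \<gamma> \<longleftrightarrow>
     adm_path M x1 x2 \<gamma> \<and> fermat_cost \<alpha> d f \<gamma> = fermat_inf \<alpha> d M f x1 x2"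

definition is_cluster :: "real \<Rightarrow> nat \<Rightarrow> 'a::euclidean_space set \<Rightarrow> ('a \<Rightarrow> real) \<Rightarrow> real \<Rightarrow> 'a set \<Rightarrow> bool" where
  "is_cluster \<alpha> d M f \<kappa> T \<longleftrightarrow> closed T \<and> T \<subseteq> M \<and>
     (\<forall>x1\<in>T. \<forall>x2\<in>T. \<forall>\<gamma>. optimal_path \<alpha> d M f x1 x2 \<gamma> \<longrightarrow>
        (\<forall>t\<in>{0..1}. \<gamma> t \<in> T \<and> f (\<gamma> t) \<ge> \<kappa>))"

text \<open>Joint law of (X,Y): X has density f w.r.t. vol_M, and P(Y = True | X = x) = eta x.\<close>
definition joint_law :: "nat \<Rightarrow> 'a::euclidean_space set \<Rightarrow> ('a \<Rightarrow> real) \<Rightarrow> ('a \<Rightarrow> real) \<Rightarrow> ('a \<times> bool) measure" where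
  "joint_law d M f \<eta> = density (vol_on d M \<Otimes>\<^sub>M count_space UNIV)
      (\<lambda>(x, y). ennreal (f x * (if y then \<eta> x else 1 - \<eta> x)))"

definition valid_model :: "nat \<Rightarrow> 'a::euclidean_space set \<Rightarrow> ('a \<Rightarrow> real) \<Rightarrow> ('a \<Rightarrow> real) \<Rightarrow> bool" where
  "valid_model d M f \<eta> \<longleftrightarrow> f \<in> borel_measurable borel \<and> (\<forall>x. f x \<ge> 0) \<and>
     (\<integral>\<^sup>+ x. ennreal (f x) \<partial>vol_on d M) = 1 \<and>
     \<eta> \<in> borel_measurable borel \<and> (\<forall>x. 0 \<le> \<eta> x \<and> \<eta> x \<le> 1)"

definition model_class ::
  "(real \<Rightarrow> nat \<Rightarrow> real) \<Rightarrow> real \<Rightarrow> nat \<Rightarrow> 'a::euclidean_space set \<Rightarrow> real \<Rightarrow> real \<Rightarrow> real \<Rightarrow> real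
    \<Rightarrow> nat \<Rightarrow> (nat \<Rightarrow> 'a set) \<Rightarrow> (('a \<Rightarrow> real) \<times> ('a \<Rightarrow> real)) set" where
  "model_class \<mu> \<alpha> d M \<kappa> \<epsilon>0 L C m T = {(f, \<eta>).
     valid_model d M f \<eta> \<and>
     (\<forall>j<m. is_cluster \<alpha> d M f \<kappa> (T j)) \<and>
     (\<exists>\<delta>>\<epsilon>0. \<forall>x\<in>(\<Union>j<m. T j). \<bar>2 * \<eta> x - 1\<bar> \<ge> \<delta>) \<and>
     (\<forall>x1\<in>M. \<forall>x2\<in>M. ennreal \<bar>\<eta> x1 - \<eta> x2\<bar> \<le> ennreal L * fermat_dist \<mu> \<alpha> d M f x1 x2) \<and>
     (\<forall>x\<in>M. \<exists>t0>0. \<forall>t. 0 < t \<and> t \<le> t0 \<longrightarrow>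
        (\<integral>\<^sup>+ y \<in> {y. fermat_dist \<mu> \<alpha> d M f y x \<le> ennreal t}. ennreal (f y) \<partial>vol_on d M)
          \<ge> ennreal (C * f x * t ^ d))}"

definition risk_T :: "nat \<Rightarrow> 'a::euclidean_space set \<Rightarrow> ('a \<Rightarrow> real) \<Rightarrow> ('a \<Rightarrow> real) \<Rightarrow> nat \<Rightarrow> (nat \<Rightarrow> 'a set)
    \<Rightarrow> ('a \<Rightarrow> bool) \<Rightarrow> ennreal" where
  "risk_T d M f \<eta> m T h = emeasure (joint_law d M f \<eta>) {(x, y). y \<noteq> h x \<and> x \<in> (\<Union>j<m. T j)}"

definition bayes :: "('a \<Rightarrow> real) \<Rightarrow> 'a \<Rightarrow> bool" where
  "bayes \<eta> x \<longleftrightarrow> \<eta> x > 1 / 2"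

definition estimators :: "nat \<Rightarrow> ((nat \<Rightarrow> 'a::euclidean_space \<times> bool) \<Rightarrow> 'a \<Rightarrow> bool) set" where
  "estimators n = {h. (\<lambda>p. h (fst p) (snd p)) \<in>
      measurable (PiM {..<n} (\<lambda>_. borel \<Otimes>\<^sub>M count_space UNIV) \<Otimes>\<^sub>M borel) (count_space UNIV)}"

definition excess_risk :: "nat \<Rightarrow> 'a::euclidean_space set \<Rightarrow> nat \<Rightarrow> (nat \<Rightarrow> 'a set) \<Rightarrow> nat
    \<Rightarrow> ((nat \<Rightarrow> 'a \<times> bool) \<Rightarrow> 'a \<Rightarrow> bool) \<Rightarrow> ('a \<Rightarrow> real) \<Rightarrow> ('a \<Rightarrow> real) \<Rightarrow> ereal" where
  "excess_risk d M m T n h f \<eta> =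
     enn2ereal (\<integral>\<^sup>+ S. risk_T d M f \<eta> m T (h S) \<partial>PiM {..<n} (\<lambda>_. joint_law d M f \<eta>))
     - enn2ereal (risk_T d M f \<eta> m T (bayes \<eta>))"

end

theory Submission imports Defs begin
lemma PiM_nn_le:
  fixes P Q :: "'b measure" and I :: "'i set"
  assumes sets: "sets P = sets Q" and sfP: "sigma_finite_measure P" and sfQ: "sigma_finite_measure Q"
   and le: "\<And>g. g \<in> borel_measurable P \<Longrightarrow> c * (\<integral>\<^sup>+y. g y \<partial>Q) \<le> (\<integral>\<^sup>+y. g y \<partial>P)"
   and fin: "finite I"
  shows "\<phi> \<in> borel_measurable (PiM I (\<lambda>_. P)) \<Longrightarrow>
     c ^ card I * (\<integral>\<^sup>+x. \<phi> x \<partial>PiM I (\<lambda>_. Q)) \<le> (\<integral>\<^sup>+x. \<phi> x \<partial>PiM I (\<lambda>_. P))"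
  using fin
proof (induction I arbitrary: \<phi> rule: finite_induct)
  case empty
  then show ?case by (simp add: PiM_empty)
next
  case (insert i I)
  interpret PP: product_sigma_finite "\<lambda>_::'i. P" using sfP by (simp add: product_sigma_finite_def)
  interpret QQ: product_sigma_finite "\<lambda>_::'i. Q" using sfQ by (simp add: product_sigma_finite_def)
  have setsI: "sets (PiM J (\<lambda>_::'i. P)) = sets (PiM J (\<lambda>_. Q))" for J
    by (rule sets_PiM_cong) (auto simp: sets)
  have phiQ: "\<phi> \<in> borel_measurable (PiM (insert i I) (\<lambda>_. Q))"
    using insert.prems measurable_cong_sets[OF setsI refl] by blast
  define \<Psi> where "\<Psi> x = (\<integral>\<^sup>+y. \<phi> (x(i:=y)) \<partial>Q)" for x
  have m2: "(\<lambda>(x,y). \<phi> (x(i:=y))) \<in> borel_measurable (PiM I (\<lambda>_. Q) \<Otimes>\<^sub>M Q)"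
    using measurable_comp[OF measurable_add_dim[of i I "\<lambda>_. Q"] phiQ]
    by (simp add: comp_def case_prod_beta')
  have PsiQ: "\<Psi> \<in> borel_measurable (PiM I (\<lambda>_. Q))"
    unfolding \<Psi>_def using sigma_finite_measure.borel_measurable_nn_integral[OF sfQ, of "\<lambda>x y. \<phi> (x(i:=y))"] m2 by simp
  have PsiP: "\<Psi> \<in> borel_measurable (PiM I (\<lambda>_. P))"
    using PsiQ measurable_cong_sets[OF setsI refl] by blast
  have "c ^ card (insert i I) * (\<integral>\<^sup>+x. \<phi> x \<partial>PiM (insert i I) (\<lambda>_. Q))
      = c * (c ^ card I * (\<integral>\<^sup>+x. \<Psi> x \<partial>PiM I (\<lambda>_. Q)))"
    using insert.hyps QQ.product_nn_integral_insert[OF insert.hyps phiQ]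
    by (simp add: \<Psi>_def mult.assoc)
  also have "\<dots> \<le> c * (\<integral>\<^sup>+x. \<Psi> x \<partial>PiM I (\<lambda>_. P))"
    by (intro mult_left_mono insert.IH PsiP) simp
  also have "\<dots> = (\<integral>\<^sup>+x. c * \<Psi> x \<partial>PiM I (\<lambda>_. P))"
    by (rule nn_integral_cmult[symmetric]) (rule PsiP)
  also have "\<dots> \<le> (\<integral>\<^sup>+x. (\<integral>\<^sup>+y. \<phi> (x(i:=y)) \<partial>P) \<partial>PiM I (\<lambda>_. P))"
  proof (rule nn_integral_mono)
    fix x assume x: "x \<in> space (PiM I (\<lambda>_. P))"
    show "c * \<Psi> x \<le> (\<integral>\<^sup>+y. \<phi> (x(i:=y)) \<partial>P)"
      unfolding \<Psi>_def
      using le measurable_comp[OF measurable_component_update[OF x insert.hyps(2)] insert.prems]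
      by (simp add: comp_def)
  qed
  also have "\<dots> = (\<integral>\<^sup>+x. \<phi> x \<partial>PiM (insert i I) (\<lambda>_. P))"
    using PP.product_nn_integral_insert[OF insert.hyps insert.prems] by (simp only:)
  finally show ?case .
qed

lemma jl_nn_integral:
  fixes \<nu> :: "'a::topological_space measure"
  assumes s\<nu>: "sets \<nu> = sets borel" and f[measurable]: "f \<in> borel_measurable borel"
    and \<eta>[measurable]: "\<eta> \<in> borel_measurable borel"
    and \<phi>[measurable]: "\<phi> \<in> borel_measurable (borel \<Otimes>\<^sub>M count_space UNIV)"
  shows "(\<integral>\<^sup>+z. \<phi> z \<partial>density (\<nu> \<Otimes>\<^sub>M count_space UNIV) (\<lambda>(x,y). ennreal (f x * (if y then \<eta> x else 1 - \<eta> x))))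
       = (\<integral>\<^sup>+x. ennreal (f x * \<eta> x) * \<phi> (x,True) + ennreal (f x * (1 - \<eta> x)) * \<phi> (x,False) \<partial>\<nu>)"
proof -
  have ss: "sets (\<nu> \<Otimes>\<^sub>M count_space UNIV) = sets (borel \<Otimes>\<^sub>M count_space UNIV)"
    by (rule sets_pair_measure_cong) (auto simp: s\<nu>)
  have w: "(\<lambda>(x,y). ennreal (f x * (if y then \<eta> x else 1 - \<eta> x))) \<in> borel_measurable (borel \<Otimes>\<^sub>M count_space (UNIV::bool set))"
    by measurable
  have w': "(\<lambda>(x,y). ennreal (f x * (if y then \<eta> x else 1 - \<eta> x))) \<in> borel_measurable (\<nu> \<Otimes>\<^sub>M count_space (UNIV::bool set))"
    using w measurable_cong_sets[OF ss refl] by blast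
  have \<phi>': "\<phi> \<in> borel_measurable (\<nu> \<Otimes>\<^sub>M count_space UNIV)"
    using \<phi> measurable_cong_sets[OF ss refl] by blast
  have sf: "sigma_finite_measure (count_space (UNIV::bool set))"
    by (rule sigma_finite_measure_count_space_finite) simp
  have "(\<integral>\<^sup>+z. \<phi> z \<partial>density (\<nu> \<Otimes>\<^sub>M count_space UNIV) (\<lambda>(x,y). ennreal (f x * (if y then \<eta> x else 1 - \<eta> x))))
     = (\<integral>\<^sup>+z. (\<lambda>(x,y). ennreal (f x * (if y then \<eta> x else 1 - \<eta> x))) z * \<phi> z \<partial>(\<nu> \<Otimes>\<^sub>M count_space UNIV))"
    by (rule nn_integral_density[OF w' \<phi>'])
  also have "\<dots> = (\<integral>\<^sup>+x. \<integral>\<^sup>+y. (\<lambda>(x,y). ennreal (f x * (if y then \<eta> x else 1 - \<eta> x))) (x,y) * \<phi> (x,y) \<partial>count_space UNIV \<partial>\<nu>)"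
    by (rule sigma_finite_measure.nn_integral_fst[OF sf, symmetric]) (use w' \<phi>' in measurable)
  also have "\<dots> = (\<integral>\<^sup>+x. ennreal (f x * \<eta> x) * \<phi> (x,True) + ennreal (f x * (1 - \<eta> x)) * \<phi> (x,False) \<partial>\<nu>)"
    by (simp add: nn_integral_count_space_finite UNIV_bool add.commute)
  finally show ?thesis .
qed

lemma vol_sets: "sets (vol_on d M) = sets borel"
  unfolding vol_on_def by (subst sets_measure_of) (auto simp: sets.sigma_sets_eq[of borel, simplified])

lemma jl_integral:
  assumes v: "valid_model d M f \<eta>"
    and \<phi>: "\<phi> \<in> borel_measurable (borel \<Otimes>\<^sub>M count_space UNIV)"
  shows "(\<integral>\<^sup>+z. \<phi> z \<partial>joint_law d M f \<eta>)
       = (\<integral>\<^sup>+x. ennreal (f x * \<eta> x) * \<phi> (x,True) + ennreal (f x * (1 - \<eta> x)) * \<phi> (x,False) \<partial>vol_on d M)"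
  unfolding joint_law_def
  by (rule jl_nn_integral[OF vol_sets _ _ \<phi>]) (use v in \<open>auto simp: valid_model_def\<close>)

lemma jl_sets: "sets (joint_law d M f \<eta>) = sets (borel \<Otimes>\<^sub>M count_space UNIV)"
  unfolding joint_law_def sets_density by (rule sets_pair_measure_cong) (auto simp: vol_sets)

lemma jl_prob:
  assumes v: "valid_model d M f \<eta>"
  shows "prob_space (joint_law d M f \<eta>)"
proof
  have "emeasure (joint_law d M f \<eta>) (space (joint_law d M f \<eta>)) = (\<integral>\<^sup>+z. 1 \<partial>joint_law d M f \<eta>)"
    by simp
  also have "\<dots> = (\<integral>\<^sup>+x. ennreal (f x * \<eta> x) + ennreal (f x * (1 - \<eta> x)) \<partial>vol_on d M)"
    by (subst jl_integral[OF v]) auto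
  also have "\<dots> = (\<integral>\<^sup>+x. ennreal (f x) \<partial>vol_on d M)"
  proof (rule nn_integral_cong)
    fix x
    have "0 \<le> f x" "0 \<le> \<eta> x" "\<eta> x \<le> 1" using v by (auto simp: valid_model_def)
    then show "ennreal (f x * \<eta> x) + ennreal (f x * (1 - \<eta> x)) = ennreal (f x)"
      using mult_right_mono[of "\<eta> x" 1 "f x"]
      by (subst ennreal_plus[symmetric]) (auto simp: algebra_simps)
  qed
  also have "\<dots> = 1" using v by (simp add: valid_model_def)
  finally show "emeasure (joint_law d M f \<eta>) (space (joint_law d M f \<eta>)) = 1" .
qed

lemma risk_eq:
  assumes v: "valid_model d M f \<eta>"
    and g[measurable]: "g \<in> measurable borel (count_space UNIV)"
    and U[measurable]: "(\<Union>j<m. T j) \<in> sets borel"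
  shows "risk_T d M f \<eta> m T g = (\<integral>\<^sup>+x. indicator (\<Union>j<m. T j) x * ennreal (f x) *
            ennreal (if g x then 1 - \<eta> x else \<eta> x) \<partial>vol_on d M)"
proof -
  let ?A = "{(x, y). y \<noteq> g x \<and> x \<in> (\<Union>j<m. T j)}"
  have A: "?A \<in> sets (borel \<Otimes>\<^sub>M count_space UNIV)"
  proof -
    have "?A = {z \<in> space (borel \<Otimes>\<^sub>M count_space UNIV). snd z \<noteq> g (fst z) \<and> fst z \<in> (\<Union>j<m. T j)}"
      by (auto simp: space_pair_measure)
    also have "\<dots> \<in> sets (borel \<Otimes>\<^sub>M count_space UNIV)"
      by measurable
    finally show ?thesis .
  qed
  have "risk_T d M f \<eta> m T g = (\<integral>\<^sup>+z. indicator ?A z \<partial>joint_law d M f \<eta>)"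
    unfolding risk_T_def using A by (simp add: jl_sets)
  also have "\<dots> = (\<integral>\<^sup>+x. ennreal (f x * \<eta> x) * indicator ?A (x,True) + ennreal (f x * (1 - \<eta> x)) * indicator ?A (x,False) \<partial>vol_on d M)"
    by (rule jl_integral[OF v]) (use A in simp)
  also have "\<dots> = (\<integral>\<^sup>+x. indicator (\<Union>j<m. T j) x * ennreal (f x) *
            ennreal (if g x then 1 - \<eta> x else \<eta> x) \<partial>vol_on d M)"
  proof (rule nn_integral_cong)
    fix x
    have "0 \<le> f x" "0 \<le> \<eta> x" "\<eta> x \<le> 1" using v by (auto simp: valid_model_def)
    then show "ennreal (f x * \<eta> x) * indicator ?A (x,True) + ennreal (f x * (1 - \<eta> x)) * indicator ?A (x,False) =
       indicator (\<Union>j<m. T j) x * ennreal (f x) * ennreal (if g x then 1 - \<eta> x else \<eta> x)"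
      by (auto simp: indicator_def ennreal_mult)
  qed
  finally show ?thesis .
qed

definition Dk :: "nat \<Rightarrow> 'a::euclidean_space set \<Rightarrow> ('a \<Rightarrow> real) \<Rightarrow> ('a \<Rightarrow> real) \<Rightarrow> nat \<Rightarrow> (nat \<Rightarrow> 'a set)
    \<Rightarrow> ('a \<Rightarrow> bool) \<Rightarrow> ennreal" where
  "Dk d M f \<eta> m T g = (\<integral>\<^sup>+x. indicator (\<Union>j<m. T j) x * ennreal (f x) *
      ennreal (if g x = bayes \<eta> x then 0 else \<bar>2 * \<eta> x - 1\<bar>) \<partial>vol_on d M)"

lemma bayes_meas[measurable]: "\<eta> \<in> borel_measurable borel \<Longrightarrow> bayes \<eta> \<in> measurable borel (count_space UNIV)"
  unfolding bayes_def by measurable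

lemma risk_decomp:
  assumes v: "valid_model d M f \<eta>"
    and g[measurable]: "g \<in> measurable borel (count_space UNIV)"
    and U[measurable]: "(\<Union>j<m. T j) \<in> sets borel"
  shows "risk_T d M f \<eta> m T g = risk_T d M f \<eta> m T (bayes \<eta>) + Dk d M f \<eta> m T g"
proof -
  have \<eta>[measurable]: "\<eta> \<in> borel_measurable borel" and f[measurable]: "f \<in> borel_measurable borel"
    using v by (auto simp: valid_model_def)
  have mv: "h \<in> borel_measurable (vol_on d M)" if "h \<in> borel_measurable borel" for h :: "'a \<Rightarrow> ennreal"
    using that measurable_cong_sets[OF vol_sets refl] by blast
  show ?thesis
    unfolding risk_eq[OF v g U] risk_eq[OF v bayes_meas[OF \<eta>] U] Dk_def
  proof (subst nn_integral_add[symmetric])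
    show "(\<lambda>x. indicator (\<Union>j<m. T j) x * ennreal (f x) * ennreal (if bayes \<eta> x then 1 - \<eta> x else \<eta> x)) \<in> borel_measurable (vol_on d M)"
      by (rule mv) measurable
    show "(\<lambda>x. indicator (\<Union>j<m. T j) x * ennreal (f x) * ennreal (if g x = bayes \<eta> x then 0 else \<bar>2 * \<eta> x - 1\<bar>)) \<in> borel_measurable (vol_on d M)"
      by (rule mv) measurable
    show "(\<integral>\<^sup>+x. indicator (\<Union>j<m. T j) x * ennreal (f x) * ennreal (if g x then 1 - \<eta> x else \<eta> x) \<partial>vol_on d M) =
     (\<integral>\<^sup>+x. indicator (\<Union>j<m. T j) x * ennreal (f x) * ennreal (if bayes \<eta> x then 1 - \<eta> x else \<eta> x) +
      indicator (\<Union>j<m. T j) x * ennreal (f x) * ennreal (if g x = bayes \<eta> x then 0 else \<bar>2 * \<eta> x - 1\<bar>) \<partial>vol_on d M)"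
    proof (rule nn_integral_cong)
      fix x
      have "0 \<le> \<eta> x" "\<eta> x \<le> 1" using v by (auto simp: valid_model_def)
      then have "ennreal (if g x then 1 - \<eta> x else \<eta> x) = ennreal (if bayes \<eta> x then 1 - \<eta> x else \<eta> x) +
          ennreal (if g x = bayes \<eta> x then 0 else \<bar>2 * \<eta> x - 1\<bar>)"
        by (auto simp: bayes_def abs_if ennreal_plus[symmetric] simp del: ennreal_plus)
      then show "indicator (\<Union>j<m. T j) x * ennreal (f x) * ennreal (if g x then 1 - \<eta> x else \<eta> x) =
        indicator (\<Union>j<m. T j) x * ennreal (f x) * ennreal (if bayes \<eta> x then 1 - \<eta> x else \<eta> x) +
        indicator (\<Union>j<m. T j) x * ennreal (f x) * ennreal (if g x = bayes \<eta> x then 0 else \<bar>2 * \<eta> x - 1\<bar>)"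
        by (simp add: distrib_left)
    qed
  qed
qed


lemma Dk_meas:
  assumes v: "valid_model d M f \<eta>" and h: "h \<in> estimators n"
    and U[measurable]: "(\<Union>j<m. T j) \<in> sets borel"
    and N: "sets N = sets (borel \<Otimes>\<^sub>M count_space (UNIV::bool set))"
  shows "(\<lambda>S. Dk d M f \<eta> m T (h S)) \<in> borel_measurable (PiM {..<n} (\<lambda>_. N))"
proof -
  have \<eta>[measurable]: "\<eta> \<in> borel_measurable borel" and f[measurable]: "f \<in> borel_measurable borel"
    using v by (auto simp: valid_model_def)
  let ?B = "PiM {..<n} (\<lambda>_. borel \<Otimes>\<^sub>M count_space (UNIV::bool set))"
  have H[measurable]: "(\<lambda>p. h (fst p) (snd p)) \<in> measurable (?B \<Otimes>\<^sub>M borel) (count_space UNIV)"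
    using h by (simp add: estimators_def)
  define Nf where "Nf = density (vol_on d M) (\<lambda>x. ennreal (f x))"
  have fv: "(\<lambda>x. ennreal (f x)) \<in> borel_measurable (vol_on d M)"
    using measurable_cong_sets[OF vol_sets refl] by (metis f measurable_compose_rev measurable_ennreal)
  have sNf: "sets Nf = sets borel" by (simp add: Nf_def vol_sets)
  have "finite_measure Nf"
  proof
    have "emeasure Nf (space Nf) = (\<integral>\<^sup>+x. ennreal (f x) \<partial>vol_on d M)"
      unfolding Nf_def by (subst emeasure_density) (auto simp: fv)
    then show "emeasure Nf (space Nf) \<noteq> \<infinity>" using v by (simp add: valid_model_def)
  qed
  then have sf: "sigma_finite_measure Nf" by (rule finite_measure.axioms)
  define G where "G p = indicator (\<Union>j<m. T j) (snd p) *
      ennreal (if h (fst p) (snd p) = bayes \<eta> (snd p) then 0 else \<bar>2 * \<eta> (snd p) - 1\<bar>)" for p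
  have G: "G \<in> borel_measurable (?B \<Otimes>\<^sub>M borel)"
    unfolding G_def by measurable
  have ss: "sets (PiM {..<n} (\<lambda>_. N) \<Otimes>\<^sub>M Nf) = sets (?B \<Otimes>\<^sub>M borel)"
    by (intro sets_pair_measure_cong sets_PiM_cong) (auto simp: N sNf)
  have G': "case_prod (\<lambda>S x. G (S, x)) \<in> borel_measurable (PiM {..<n} (\<lambda>_. N) \<Otimes>\<^sub>M Nf)"
  proof -
    have "G \<in> borel_measurable (PiM {..<n} (\<lambda>_. N) \<Otimes>\<^sub>M Nf)"
      using G measurable_cong_sets[OF ss refl] by blast
    then show ?thesis by (simp add: case_prod_beta')
  qed
  have m1: "(\<lambda>S. \<integral>\<^sup>+x. G (S, x) \<partial>Nf) \<in> borel_measurable (PiM {..<n} (\<lambda>_. N))"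
    by (rule sigma_finite_measure.borel_measurable_nn_integral[OF sf G'])
  have spB: "space (PiM {..<n} (\<lambda>_. N)) = space ?B"
    by (rule sets_eq_imp_space_eq, rule sets_PiM_cong) (auto simp: N)
  show ?thesis
  proof (rule measurable_cong[THEN iffD1, OF _ m1])
    fix S assume S: "S \<in> space (PiM {..<n} (\<lambda>_. N))"
    then have S': "S \<in> space ?B" using spB by simp
    have Gx: "(\<lambda>x. G (S, x)) \<in> borel_measurable borel"
      using measurable_Pair2[OF G S'] by simp
    have Gx': "(\<lambda>x. G (S, x)) \<in> borel_measurable (vol_on d M)"
      using Gx measurable_cong_sets[OF vol_sets refl] by blast
    show "(\<integral>\<^sup>+x. G (S, x) \<partial>Nf) = Dk d M f \<eta> m T (h S)"
      unfolding Nf_def Dk_def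
      by (subst nn_integral_density[OF fv Gx']) (rule nn_integral_cong, simp add: G_def mult_ac)
  qed
qed


lemma jl_compare:
  assumes v: "valid_model d M f \<eta>" and v': "valid_model d M f \<eta>'" and e: "0 \<le> e"
    and le1: "\<And>x. e * \<eta>' x \<le> \<eta> x" and le2: "\<And>x. e * (1 - \<eta>' x) \<le> 1 - \<eta> x"
    and g: "g \<in> borel_measurable (joint_law d M f \<eta>)"
  shows "ennreal e * (\<integral>\<^sup>+z. g z \<partial>joint_law d M f \<eta>') \<le> (\<integral>\<^sup>+z. g z \<partial>joint_law d M f \<eta>)"
proof -
  have \<eta>[measurable]: "\<eta> \<in> borel_measurable borel" and f[measurable]: "f \<in> borel_measurable borel"
    and \<eta>'[measurable]: "\<eta>' \<in> borel_measurable borel"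
    using v v' by (auto simp: valid_model_def)
  have g'[measurable]: "g \<in> borel_measurable (borel \<Otimes>\<^sub>M count_space UNIV)"
    using g measurable_cong_sets[OF jl_sets refl] by blast
  have mv: "X \<in> borel_measurable (vol_on d M)" if "X \<in> borel_measurable borel" for X :: "'a \<Rightarrow> ennreal"
    using that measurable_cong_sets[OF vol_sets refl] by blast
  have "ennreal e * (\<integral>\<^sup>+z. g z \<partial>joint_law d M f \<eta>') =
      ennreal e * (\<integral>\<^sup>+x. ennreal (f x * \<eta>' x) * g (x,True) + ennreal (f x * (1 - \<eta>' x)) * g (x,False) \<partial>vol_on d M)"
    by (simp add: jl_integral[OF v' g'])
  also have "\<dots> = (\<integral>\<^sup>+x. ennreal e * (ennreal (f x * \<eta>' x) * g (x,True) + ennreal (f x * (1 - \<eta>' x)) * g (x,False)) \<partial>vol_on d M)"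
    by (rule nn_integral_cmult[symmetric], rule mv) measurable
  also have "\<dots> \<le> (\<integral>\<^sup>+x. ennreal (f x * \<eta> x) * g (x,True) + ennreal (f x * (1 - \<eta> x)) * g (x,False) \<partial>vol_on d M)"
  proof (rule nn_integral_mono)
    fix x
    have f0: "0 \<le> f x" "0 \<le> \<eta>' x" "\<eta>' x \<le> 1" using v v' by (auto simp: valid_model_def)
    have a: "ennreal e * ennreal (f x * \<eta>' x) \<le> ennreal (f x * \<eta> x)"
      using mult_left_mono[OF le1[of x] f0(1)] f0 e by (simp add: ennreal_mult[symmetric] ac_simps ennreal_leI)
    have b: "ennreal e * ennreal (f x * (1 - \<eta>' x)) \<le> ennreal (f x * (1 - \<eta> x))"
      using mult_left_mono[OF le2[of x] f0(1)] f0 e by (simp add: ennreal_mult[symmetric] ac_simps ennreal_leI)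
    show "ennreal e * (ennreal (f x * \<eta>' x) * g (x,True) + ennreal (f x * (1 - \<eta>' x)) * g (x,False))
       \<le> ennreal (f x * \<eta> x) * g (x,True) + ennreal (f x * (1 - \<eta> x)) * g (x,False)"
      unfolding distrib_left mult.assoc[symmetric]
      by (intro add_mono mult_right_mono a b) auto
  qed
  also have "\<dots> = (\<integral>\<^sup>+z. g z \<partial>joint_law d M f \<eta>)"
    by (simp add: jl_integral[OF v g'])
  finally show ?thesis .
qed

lemma Dk_sum:
  assumes v: "valid_model d M f \<eta>" and v': "valid_model d M f (\<lambda>x. 1 - \<eta> x)"
    and ne: "\<And>x. x \<in> (\<Union>j<m. T j) \<Longrightarrow> \<eta> x \<noteq> 1/2"
    and g[measurable]: "g \<in> measurable borel (count_space UNIV)"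
    and U[measurable]: "(\<Union>j<m. T j) \<in> sets borel"
  shows "Dk d M f \<eta> m T g + Dk d M f (\<lambda>x. 1 - \<eta> x) m T g =
     (\<integral>\<^sup>+x. indicator (\<Union>j<m. T j) x * ennreal (f x) * ennreal \<bar>2 * \<eta> x - 1\<bar> \<partial>vol_on d M)"
proof -
  have \<eta>[measurable]: "\<eta> \<in> borel_measurable borel" and f[measurable]: "f \<in> borel_measurable borel"
    using v by (auto simp: valid_model_def)
  have mv: "X \<in> borel_measurable (vol_on d M)" if "X \<in> borel_measurable borel" for X :: "'a \<Rightarrow> ennreal"
    using that measurable_cong_sets[OF vol_sets refl] by blast
  show ?thesis
    unfolding Dk_def
  proof (subst nn_integral_add[symmetric])
    show "(\<lambda>x. indicator (\<Union>j<m. T j) x * ennreal (f x) * ennreal (if g x = bayes \<eta> x then 0 else \<bar>2 * \<eta> x - 1\<bar>)) \<in> borel_measurable (vol_on d M)"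
      by (rule mv) measurable
    show "(\<lambda>x. indicator (\<Union>j<m. T j) x * ennreal (f x) * ennreal (if g x = bayes (\<lambda>x. 1 - \<eta> x) x then 0 else \<bar>2 * (1 - \<eta> x) - 1\<bar>)) \<in> borel_measurable (vol_on d M)"
      by (rule mv) measurable
    show "(\<integral>\<^sup>+x. indicator (\<Union>j<m. T j) x * ennreal (f x) * ennreal (if g x = bayes \<eta> x then 0 else \<bar>2 * \<eta> x - 1\<bar>) +
      indicator (\<Union>j<m. T j) x * ennreal (f x) * ennreal (if g x = bayes (\<lambda>x. 1 - \<eta> x) x then 0 else \<bar>2 * (1 - \<eta> x) - 1\<bar>) \<partial>vol_on d M) =
      (\<integral>\<^sup>+x. indicator (\<Union>j<m. T j) x * ennreal (f x) * ennreal \<bar>2 * \<eta> x - 1\<bar> \<partial>vol_on d M)"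
    proof (rule nn_integral_cong)
      fix x
      show "indicator (\<Union>j<m. T j) x * ennreal (f x) * ennreal (if g x = bayes \<eta> x then 0 else \<bar>2 * \<eta> x - 1\<bar>) +
        indicator (\<Union>j<m. T j) x * ennreal (f x) * ennreal (if g x = bayes (\<lambda>x. 1 - \<eta> x) x then 0 else \<bar>2 * (1 - \<eta> x) - 1\<bar>) =
        indicator (\<Union>j<m. T j) x * ennreal (f x) * ennreal \<bar>2 * \<eta> x - 1\<bar>"
      proof (cases "x \<in> (\<Union>j<m. T j)")
        case True
        then have "\<eta> x \<noteq> 1/2" by (rule ne)
        then have "bayes (\<lambda>x. 1 - \<eta> x) x = (\<not> bayes \<eta> x)" "\<bar>2 * (1 - \<eta> x) - 1\<bar> = \<bar>2 * \<eta> x - 1\<bar>"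
          by (auto simp: bayes_def)
        then show ?thesis using True by (auto simp: indicator_def)
      qed simp
    qed
  qed
qed


lemma ee: "(a::ennreal) \<noteq> top \<Longrightarrow> enn2ereal a + enn2ereal b - enn2ereal a = enn2ereal b"
proof -
  assume a: "a \<noteq> top"
  then obtain r where r: "a = ennreal r" "0 \<le> r" by (cases a) auto
  show ?thesis using r by (cases "enn2ereal b") auto
qed

lemma hmeas:
  assumes h: "h \<in> estimators n" and N: "sets N = sets (borel \<Otimes>\<^sub>M count_space (UNIV::bool set))"
    and S: "S \<in> space (PiM {..<n} (\<lambda>_. N))"
  shows "h S \<in> measurable borel (count_space UNIV)"
proof -
  let ?B = "PiM {..<n} (\<lambda>_. borel \<Otimes>\<^sub>M count_space (UNIV::bool set))"
  have H: "(\<lambda>p. h (fst p) (snd p)) \<in> measurable (?B \<Otimes>\<^sub>M borel) (count_space UNIV)"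
    using h by (simp add: estimators_def)
  have spB: "space (PiM {..<n} (\<lambda>_. N)) = space ?B"
    by (rule sets_eq_imp_space_eq, rule sets_PiM_cong) (auto simp: N)
  show ?thesis using measurable_Pair2[OF H, of S] S spB by simp
qed

lemma excess_eq:
  assumes v: "valid_model d M f \<eta>" and h: "h \<in> estimators n"
    and U[measurable]: "(\<Union>j<m. T j) \<in> sets borel"
  shows "excess_risk d M m T n h f \<eta> =
    enn2ereal (\<integral>\<^sup>+S. Dk d M f \<eta> m T (h S) \<partial>PiM {..<n} (\<lambda>_. joint_law d M f \<eta>))"
proof -
  let ?Pn = "PiM {..<n} (\<lambda>_. joint_law d M f \<eta>)"
  let ?R = "risk_T d M f \<eta> m T (bayes \<eta>)"
  have pP: "prob_space (joint_law d M f \<eta>)" by (rule jl_prob[OF v])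
  have pPn: "prob_space ?Pn" by (rule prob_space_PiM) (rule pP)
  have R1: "?R \<le> 1"
    unfolding risk_T_def by (rule prob_space.emeasure_le_1[OF pP])
  have R: "?R \<noteq> top"
    by (rule neq_top_trans[OF ennreal_one_neq_top R1])
  have "(\<integral>\<^sup>+S. risk_T d M f \<eta> m T (h S) \<partial>?Pn) = (\<integral>\<^sup>+S. ?R + Dk d M f \<eta> m T (h S) \<partial>?Pn)"
    by (rule nn_integral_cong, rule risk_decomp[OF v _ U], rule hmeas[OF h jl_sets])
  also have "\<dots> = (\<integral>\<^sup>+S. ?R \<partial>?Pn) + (\<integral>\<^sup>+S. Dk d M f \<eta> m T (h S) \<partial>?Pn)"
    by (rule nn_integral_add) (auto intro: Dk_meas[OF v h U jl_sets])
  also have "\<dots> = ?R + (\<integral>\<^sup>+S. Dk d M f \<eta> m T (h S) \<partial>?Pn)"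
    using prob_space.emeasure_space_1[OF pPn] by simp
  finally show ?thesis
    unfolding excess_risk_def using R by (simp add: plus_ennreal.rep_eq ee)
qed

theorem theorem1:
  fixes M :: "'a::euclidean_space set" and d :: nat
    and \<mu> :: "real \<Rightarrow> nat \<Rightarrow> real"
    and \<alpha> \<kappa> \<epsilon>0 L C :: real
    and m :: nat and T :: "nat \<Rightarrow> 'a set"
  assumes manifold: "compact_manifold d M" and dpos: "d \<ge> 1"
    and mu_pos: "\<forall>a k. \<mu> a k > 0" and mu_one: "\<forall>k. \<mu> 1 k = 1"
    and alpha: "\<alpha> \<ge> 1" and kappa: "\<kappa> > 0" and eps: "\<epsilon>0 > 0" and Lpos: "L > 0" and Cpos: "C > 0"
    and T_closed: "\<forall>j<m. closed (T j) \<and> T j \<subseteq> M"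
    and T_disj: "\<forall>i<m. \<forall>j<m. i \<noteq> j \<longrightarrow> T i \<inter> T j = {}"
    and nondegenerate: "\<exists>(f, \<eta>) \<in> model_class \<mu> \<alpha> d M \<kappa> \<epsilon>0 L C m T.
                           (\<integral>\<^sup>+ x \<in> (\<Union>j<m. T j). ennreal (f x) \<partial>vol_on d M) > 0"
  shows "\<exists>C1>0. \<exists>C2>0. \<forall>n\<ge>1.
           (INF h \<in> estimators n. SUP (f, \<eta>) \<in> model_class \<mu> \<alpha> d M \<kappa> \<epsilon>0 L C m T.
               excess_risk d M m T n h f \<eta>)
           \<ge> ereal (C1 * exp (- C2 * real n))"
proof -
  let ?U = "\<Union>j<m. T j"
  let ?\<nu> = "vol_on d M"
  let ?cls = "model_class \<mu> \<alpha> d M \<kappa> \<epsilon>0 L C m T"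
  have U[measurable]: "?U \<in> sets borel"
    using T_closed by (intro sets.finite_UN) auto
  obtain f \<eta> where f\<eta>: "(f, \<eta>) \<in> ?cls"
    and pos: "(\<integral>\<^sup>+ x \<in> ?U. ennreal (f x) \<partial>?\<nu>) > 0"
    using nondegenerate by auto
  have v: "valid_model d M f \<eta>" and A1: "\<exists>\<delta>>\<epsilon>0. \<forall>x\<in>?U. \<bar>2 * \<eta> x - 1\<bar> \<ge> \<delta>"
    and A2: "\<forall>x1\<in>M. \<forall>x2\<in>M. ennreal \<bar>\<eta> x1 - \<eta> x2\<bar> \<le> ennreal L * fermat_dist \<mu> \<alpha> d M f x1 x2"
    using f\<eta> by (auto simp: model_class_def)
  have f_meas[measurable]: "f \<in> borel_measurable borel" and f0: "\<And>x. 0 \<le> f x"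
    and \<eta>01: "\<And>x. 0 \<le> \<eta> x \<and> \<eta> x \<le> 1" and \<eta>_meas[measurable]: "\<eta> \<in> borel_measurable borel"
    and fint: "(\<integral>\<^sup>+ x. ennreal (f x) \<partial>?\<nu>) = 1"
    using v by (auto simp: valid_model_def)
  obtain \<delta> where \<delta>: "\<delta> > \<epsilon>0" "\<And>x. x \<in> ?U \<Longrightarrow> \<delta> \<le> \<bar>2 * \<eta> x - 1\<bar>" using A1 by auto
  define s where "s = (1 + \<epsilon>0 / \<delta>) / 2"
  have \<delta>0: "\<delta> > 0" using \<delta> eps by simp
  have q: "\<epsilon>0 / \<delta> < 1" "0 < \<epsilon>0 / \<delta>" using \<delta> \<delta>0 eps by (auto simp: field_simps)
  have s0: "0 < s" "s < 1" using q by (auto simp: s_def)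
  have s\<delta>: "\<epsilon>0 < s * \<delta>"
  proof -
    have "s * \<delta> = (\<delta> + \<epsilon>0) / 2" using \<delta>0 by (simp add: s_def field_simps)
    then show ?thesis using \<delta> by simp
  qed
  define e where "e = (1 - s) / 2"
  have e0: "0 < e" "e < 1" using s0 by (auto simp: e_def)
  have es: "e + s = 1 - e" by (simp add: e_def field_simps)
  define \<eta>1 where "\<eta>1 x = e + s * \<eta> x" for x
  have gen: "(f, \<lambda>x. e + s * \<zeta> x) \<in> ?cls"
    if vz: "valid_model d M f \<zeta>" and z1: "\<And>x. x \<in> ?U \<Longrightarrow> \<delta> \<le> \<bar>2 * \<zeta> x - 1\<bar>"
      and z2: "\<forall>x1\<in>M. \<forall>x2\<in>M. ennreal \<bar>\<zeta> x1 - \<zeta> x2\<bar> \<le> ennreal L * fermat_dist \<mu> \<alpha> d M f x1 x2"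
    for \<zeta>
  proof -
    have z01: "0 \<le> \<zeta> x" "\<zeta> x \<le> 1" for x using vz by (auto simp: valid_model_def)
    have zm[measurable]: "\<zeta> \<in> borel_measurable borel" using vz by (auto simp: valid_model_def)
    have "valid_model d M f (\<lambda>x. e + s * \<zeta> x)"
    proof -
      have "0 \<le> e + s * \<zeta> x \<and> e + s * \<zeta> x \<le> 1" for x
      proof -
        have "s * \<zeta> x \<le> s" using z01[of x] s0 by (simp add: mult_left_le)
        then show ?thesis using e0 s0 z01[of x] es mult_nonneg_nonneg[of s "\<zeta> x"] by (intro conjI; linarith)
      qed
      then show ?thesis using vz by (auto simp: valid_model_def)
    qed
    moreover have "\<forall>x\<in>?U. \<bar>2 * (e + s * \<zeta> x) - 1\<bar> \<ge> s * \<delta>"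
    proof
      fix x assume "x \<in> ?U"
      have "\<bar>2 * (e + s * \<zeta> x) - 1\<bar> = s * \<bar>2 * \<zeta> x - 1\<bar>"
      proof -
        have "2 * (e + s * \<zeta> x) - 1 = s * (2 * \<zeta> x - 1)" by (simp add: e_def field_simps)
        then show ?thesis using s0 by (simp add: abs_mult)
      qed
      then show "\<bar>2 * (e + s * \<zeta> x) - 1\<bar> \<ge> s * \<delta>"
        using z1[OF \<open>x \<in> ?U\<close>] s0 by simp
    qed
    then have "\<exists>\<delta>'>\<epsilon>0. \<forall>x\<in>?U. \<bar>2 * (e + s * \<zeta> x) - 1\<bar> \<ge> \<delta>'"
      using s\<delta> by blast
    moreover have "\<forall>x1\<in>M. \<forall>x2\<in>M. ennreal \<bar>(e + s * \<zeta> x1) - (e + s * \<zeta> x2)\<bar> \<le> ennreal L * fermat_dist \<mu> \<alpha> d M f x1 x2"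
    proof (intro ballI)
      fix x1 x2 assume x: "x1 \<in> M" "x2 \<in> M"
      have "\<bar>(e + s * \<zeta> x1) - (e + s * \<zeta> x2)\<bar> = s * \<bar>\<zeta> x1 - \<zeta> x2\<bar>"
      proof -
        have "(e + s * \<zeta> x1) - (e + s * \<zeta> x2) = s * (\<zeta> x1 - \<zeta> x2)" by (simp add: right_diff_distrib)
        then show ?thesis using s0 by (simp add: abs_mult)
      qed
      also have "\<dots> \<le> \<bar>\<zeta> x1 - \<zeta> x2\<bar>" using s0 by (simp add: mult_left_le_one_le)
      finally have "ennreal \<bar>(e + s * \<zeta> x1) - (e + s * \<zeta> x2)\<bar> \<le> ennreal \<bar>\<zeta> x1 - \<zeta> x2\<bar>"
        by (rule ennreal_leI)
      also have "\<dots> \<le> ennreal L * fermat_dist \<mu> \<alpha> d M f x1 x2" using z2 x by blast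
      finally show "ennreal \<bar>(e + s * \<zeta> x1) - (e + s * \<zeta> x2)\<bar> \<le> ennreal L * fermat_dist \<mu> \<alpha> d M f x1 x2" .
    qed
    ultimately show ?thesis using f\<eta> by (auto simp: model_class_def)
  qed
  have mem1: "(f, \<eta>1) \<in> ?cls"
    unfolding \<eta>1_def by (rule gen[OF v \<delta>(2) A2])
  have eq2: "(\<lambda>x. 1 - \<eta>1 x) = (\<lambda>x. e + s * (1 - \<eta> x))"
    by (rule ext) (simp add: \<eta>1_def e_def field_simps)
  have mem2: "(f, \<lambda>x. 1 - \<eta>1 x) \<in> ?cls"
  proof -
    have "valid_model d M f (\<lambda>x. 1 - \<eta> x)" using v by (auto simp: valid_model_def)
    moreover have "\<delta> \<le> \<bar>2 * (1 - \<eta> x) - 1\<bar>" if "x \<in> ?U" for x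
    proof -
      have "\<bar>2 * (1 - \<eta> x) - 1\<bar> = \<bar>2 * \<eta> x - 1\<bar>" by (simp add: abs_if algebra_simps)
      then show ?thesis using \<delta>(2)[OF that] by simp
    qed
    moreover have "\<forall>x1\<in>M. \<forall>x2\<in>M. ennreal \<bar>(1 - \<eta> x1) - (1 - \<eta> x2)\<bar> \<le> ennreal L * fermat_dist \<mu> \<alpha> d M f x1 x2"
    proof (intro ballI)
      fix x1 x2 assume "x1 \<in> M" "x2 \<in> M"
      moreover have "\<bar>(1 - \<eta> x1) - (1 - \<eta> x2)\<bar> = \<bar>\<eta> x1 - \<eta> x2\<bar>" by (simp add: abs_if algebra_simps)
      ultimately show "ennreal \<bar>(1 - \<eta> x1) - (1 - \<eta> x2)\<bar> \<le> ennreal L * fermat_dist \<mu> \<alpha> d M f x1 x2"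
        using A2 by simp
    qed
    ultimately show ?thesis unfolding eq2 by (rule gen)
  qed
  have v1: "valid_model d M f \<eta>1" using mem1 by (simp add: model_class_def)
  have v2: "valid_model d M f (\<lambda>x. 1 - \<eta>1 x)" using mem2 by (simp add: model_class_def)
  have \<eta>1b: "e \<le> \<eta>1 x" "\<eta>1 x \<le> 1 - e" for x
  proof -
    have "s * \<eta> x \<le> s" "0 \<le> s * \<eta> x" using \<eta>01[of x] s0 by (auto simp: mult_left_le)
    then show "e \<le> \<eta>1 x" "\<eta>1 x \<le> 1 - e" using es by (auto simp: \<eta>1_def)
  qed
  have \<eta>1U: "s * \<delta> \<le> \<bar>2 * \<eta>1 x - 1\<bar>" if "x \<in> ?U" for x
  proof -
    have "2 * \<eta>1 x - 1 = s * (2 * \<eta> x - 1)" by (simp add: \<eta>1_def e_def field_simps)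
    then have "\<bar>2 * \<eta>1 x - 1\<bar> = s * \<bar>2 * \<eta> x - 1\<bar>" using s0 by (simp add: abs_mult)
    then show ?thesis using \<delta>(2)[OF that] s0 by simp
  qed
  have ne: "\<eta>1 x \<noteq> 1/2" if "x \<in> ?U" for x
    using \<eta>1U[OF that] s\<delta> eps by auto
  have mv: "X \<in> borel_measurable ?\<nu>" if "X \<in> borel_measurable borel" for X :: "'a \<Rightarrow> ennreal"
    using that measurable_cong_sets[OF vol_sets refl] by blast
  have \<eta>1m[measurable]: "\<eta>1 \<in> borel_measurable borel" using v1 by (simp add: valid_model_def)
  define K where "K = (\<integral>\<^sup>+x. indicator ?U x * ennreal (f x) * ennreal \<bar>2 * \<eta>1 x - 1\<bar> \<partial>?\<nu>)"
  have K_le: "K \<le> 1"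
  proof -
    have "K \<le> (\<integral>\<^sup>+ x. ennreal (f x) \<partial>?\<nu>)"
      unfolding K_def
    proof (rule nn_integral_mono)
      fix x
      have "\<bar>2 * \<eta>1 x - 1\<bar> \<le> 1" using \<eta>1b[of x] e0 by auto
      then have "ennreal \<bar>2 * \<eta>1 x - 1\<bar> \<le> 1" by (simp add: ennreal_leI)
      then have "ennreal (f x) * ennreal \<bar>2 * \<eta>1 x - 1\<bar> \<le> ennreal (f x) * 1"
        by (rule mult_left_mono) simp
      then show "indicator ?U x * ennreal (f x) * ennreal \<bar>2 * \<eta>1 x - 1\<bar> \<le> ennreal (f x)"
        by (auto simp: indicator_def)
    qed
    then show ?thesis using fint by simp
  qed
  have K_pos: "K > 0"
  proof -
    have "(\<integral>\<^sup>+x. ennreal (s * \<delta>) * (ennreal (f x) * indicator ?U x) \<partial>?\<nu>) \<le> K"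
      unfolding K_def
    proof (rule nn_integral_mono)
      fix x
      show "ennreal (s * \<delta>) * (ennreal (f x) * indicator ?U x) \<le> indicator ?U x * ennreal (f x) * ennreal \<bar>2 * \<eta>1 x - 1\<bar>"
      proof (cases "x \<in> ?U")
        case True
        have "ennreal (s * \<delta>) \<le> ennreal \<bar>2 * \<eta>1 x - 1\<bar>" by (rule ennreal_leI) (rule \<eta>1U[OF True])
        then show ?thesis using True by (simp add: mult_left_mono mult.commute)
      qed simp
    qed
    moreover have "(\<integral>\<^sup>+x. ennreal (s * \<delta>) * (ennreal (f x) * indicator ?U x) \<partial>?\<nu>) =
        ennreal (s * \<delta>) * (\<integral>\<^sup>+ x \<in> ?U. ennreal (f x) \<partial>?\<nu>)"
      by (rule nn_integral_cmult, rule mv) measurable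
    moreover have "ennreal (s * \<delta>) * (\<integral>\<^sup>+ x \<in> ?U. ennreal (f x) \<partial>?\<nu>) > 0"
      using pos s0 \<delta>0 by (simp add: ennreal_zero_less_mult_iff)
    ultimately show ?thesis by (metis order.strict_trans2)
  qed
  define k where "k = enn2real K"
  have Ktop: "K < top" using K_le ennreal_one_less_top by (rule le_less_trans)
  have Kk: "K = ennreal k" and k0: "k > 0"
    using K_le K_pos Ktop unfolding k_def
    by (auto simp: ennreal_enn2real_if neq_top_trans[OF ennreal_one_neq_top K_le] enn2real_positive_iff
        intro: enn2real_positive_iff[THEN iffD2])
  show ?thesis
  proof (rule exI[of _ "k / 2"], intro conjI exI[of _ "- ln e"] allI impI)
    show "0 < k / 2" using k0 by simp
    show "0 < - ln e" using e0 by simp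
    fix n :: nat assume "1 \<le> n"
    have expn: "exp (- (- ln e) * real n) = e ^ n"
    proof -
      have "exp (- (- ln e) * real n) = exp (of_nat n * ln e)" by simp
      also have "\<dots> = e ^ n" by (subst exp_of_nat_mult) (simp add: e0)
      finally show ?thesis .
    qed
    show "ereal (k / 2 * exp (- (- ln e) * real n)) \<le>
      (INF h \<in> estimators n. SUP (f, \<eta>) \<in> ?cls. excess_risk d M m T n h f \<eta>)"
    proof (rule INF_greatest)
      fix h :: "(nat \<Rightarrow> 'a \<times> bool) \<Rightarrow> 'a \<Rightarrow> bool" assume h: "h \<in> estimators n"
      let ?P = "joint_law d M f \<eta>1" and ?Q = "joint_law d M f (\<lambda>x. 1 - \<eta>1 x)"
      let ?Pn = "PiM {..<n} (\<lambda>_. ?P)" and ?Qn = "PiM {..<n} (\<lambda>_. ?Q)"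
      define A where "A = (\<integral>\<^sup>+S. Dk d M f \<eta>1 m T (h S) \<partial>?Pn)"
      define B where "B = (\<integral>\<^sup>+S. Dk d M f (\<lambda>x. 1 - \<eta>1 x) m T (h S) \<partial>?Qn)"
      have exA: "excess_risk d M m T n h f \<eta>1 = enn2ereal A"
        unfolding A_def by (rule excess_eq[OF v1 h U])
      have exB: "excess_risk d M m T n h f (\<lambda>x. 1 - \<eta>1 x) = enn2ereal B"
        unfolding B_def by (rule excess_eq[OF v2 h U])
      have pQ: "prob_space ?Q" by (rule jl_prob[OF v2])
      have pP: "prob_space ?P" by (rule jl_prob[OF v1])
      have pQn: "prob_space ?Qn" by (rule prob_space_PiM) (rule pQ)
      have D1Q: "(\<lambda>S. Dk d M f \<eta>1 m T (h S)) \<in> borel_measurable ?Qn"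
        by (rule Dk_meas[OF v1 h U jl_sets])
      have D2Q: "(\<lambda>S. Dk d M f (\<lambda>x. 1 - \<eta>1 x) m T (h S)) \<in> borel_measurable ?Qn"
        by (rule Dk_meas[OF v2 h U jl_sets])
      have A_ge: "ennreal e ^ n * (\<integral>\<^sup>+S. Dk d M f \<eta>1 m T (h S) \<partial>?Qn) \<le> A"
      proof -
        have "ennreal e ^ card {..<n} * (\<integral>\<^sup>+S. Dk d M f \<eta>1 m T (h S) \<partial>?Qn) \<le> A"
          unfolding A_def
        proof (rule PiM_nn_le)
          show "sets ?P = sets ?Q" by (simp add: jl_sets)
          show "sigma_finite_measure ?P" using pP by (metis prob_space_imp_sigma_finite)
          show "sigma_finite_measure ?Q" using pQ by (metis prob_space_imp_sigma_finite)
          show "finite {..<n}" by simp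
          show "(\<lambda>S. Dk d M f \<eta>1 m T (h S)) \<in> borel_measurable ?Pn"
            by (rule Dk_meas[OF v1 h U jl_sets])
          fix g :: "'a \<times> bool \<Rightarrow> ennreal" assume g: "g \<in> borel_measurable ?P"
          show "ennreal e * integral\<^sup>N ?Q g \<le> integral\<^sup>N ?P g"
          proof (rule jl_compare[OF v1 v2 _ _ _ g])
            show "0 \<le> e" using e0 by simp
            fix x
            have "e * (1 - \<eta>1 x) \<le> e * 1"
              by (rule mult_left_mono) (use \<eta>1b[of x] e0 in auto)
            then show "e * (1 - \<eta>1 x) \<le> \<eta>1 x"
              using \<eta>1b[of x] by simp
            have "e * \<eta>1 x \<le> e * 1"
              by (rule mult_left_mono) (use \<eta>1b[of x] e0 in auto)
            then show "e * (1 - (1 - \<eta>1 x)) \<le> 1 - \<eta>1 x"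
              using \<eta>1b[of x] by simp
          qed
        qed
        then show ?thesis by simp
      qed
      have B_ge: "ennreal e ^ n * B \<le> B"
      proof -
        have "ennreal e ^ n \<le> 1" using e0 by (simp add: ennreal_power power_le_one ennreal_leI)
        then have "ennreal e ^ n * B \<le> 1 * B" by (rule mult_right_mono) simp
        then show ?thesis by simp
      qed
      have sumQ: "(\<integral>\<^sup>+S. Dk d M f \<eta>1 m T (h S) \<partial>?Qn) + B = K"
      proof -
        have "(\<integral>\<^sup>+S. Dk d M f \<eta>1 m T (h S) \<partial>?Qn) + B =
            (\<integral>\<^sup>+S. Dk d M f \<eta>1 m T (h S) + Dk d M f (\<lambda>x. 1 - \<eta>1 x) m T (h S) \<partial>?Qn)"
          unfolding B_def by (rule nn_integral_add[symmetric, OF D1Q D2Q])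
        also have "\<dots> = (\<integral>\<^sup>+S. K \<partial>?Qn)"
          unfolding K_def
          by (rule nn_integral_cong, rule Dk_sum[OF v1 v2 ne _ U], assumption,
              rule hmeas[OF h jl_sets])
        also have "\<dots> = K" using prob_space.emeasure_space_1[OF pQn] by simp
        finally show ?thesis .
      qed
      have AB: "ennreal (e ^ n * k) \<le> A + B"
      proof -
        have "ennreal (e ^ n * k) = ennreal e ^ n * K"
          using e0 k0 by (simp add: Kk ennreal_mult ennreal_power)
        also have "\<dots> = ennreal e ^ n * (\<integral>\<^sup>+S. Dk d M f \<eta>1 m T (h S) \<partial>?Qn) + ennreal e ^ n * B"
          by (simp add: sumQ[symmetric] distrib_left)
        also have "\<dots> \<le> A + B" using A_ge B_ge by (rule add_mono)
        finally show ?thesis .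
      qed
      define r where "r = k / 2 * e ^ n"
      have r0: "0 \<le> r" using k0 e0 by (simp add: r_def)
      have rr: "ennreal (e ^ n * k) = ennreal r + ennreal r"
        using r0 by (simp add: ennreal_plus[symmetric] r_def mult.commute del: ennreal_plus)
      have AorB: "ennreal r \<le> A \<or> ennreal r \<le> B"
      proof (rule ccontr)
        assume "\<not> (ennreal r \<le> A \<or> ennreal r \<le> B)"
        then have "A + B < ennreal r + ennreal r" by (simp add: not_le add_strict_mono)
        then show False using AB rr by simp
      qed
      have goal_eq: "ereal (k / 2 * exp (- (- ln e) * real n)) = enn2ereal (ennreal r)"
        using r0 unfolding expn by (simp add: r_def)
      show "ereal (k / 2 * exp (- (- ln e) * real n)) \<le> (SUP (f, \<eta>) \<in> ?cls. excess_risk d M m T n h f \<eta>)"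
        unfolding goal_eq
      proof (cases "ennreal r \<le> A")
        case True
        then have "enn2ereal (ennreal r) \<le> excess_risk d M m T n h f \<eta>1"
          unfolding exA by (simp add: less_eq_ennreal.rep_eq[symmetric])
        then show "enn2ereal (ennreal r) \<le> (SUP (f, \<eta>) \<in> ?cls. excess_risk d M m T n h f \<eta>)"
          by (intro SUP_upper2[OF mem1]) simp
      next
        case False
        then have "ennreal r \<le> B" using AorB by simp
        then have "enn2ereal (ennreal r) \<le> excess_risk d M m T n h f (\<lambda>x. 1 - \<eta>1 x)"
          unfolding exB by (simp add: less_eq_ennreal.rep_eq[symmetric])
        then show "enn2ereal (ennreal r) \<le> (SUP (f, \<eta>) \<in> ?cls. excess_risk d M m T n h f \<eta>)"
          by (intro SUP_upper2[OF mem2]) simp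
      qed
    qed
  qed
qed

end
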